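(* Let ${\bf V}$ be the $N\times N$ random Vandermonde matrix whose phases are i.i.d. with law $\nu$, absolutely continuous on $[-\pi,\pi]$ with bounded density $f\in L^\infty([-\pi,\pi])$, and let $\lambda_N$ be the largest eigenvalue of ${\bf V}^*{\bf V}$. Then, as $N\to\infty$, $$\mathbb{E}(\lambda_N)\le\big(4\pi\|f\|_\infty(e-1)+1\big)\log N+o(1).$$
   Context: ${\bf V}=N^{-1/2}(e^{-j(k-1)\theta_l})_{1\le k,l\le N}$ with $\theta_1,\dots,\theta_N$ i.i.d. with law $\nu$. *)

theory Defs
  imports "HOL-Probability.Probability" "Jordan_Normal_Form.Schur_Decomposition"
begin

text \<open>The N x N random Vandermonde matrix V = N^(-1/2) (exp(-i (k-1) theta_l)), k,l = 1..N,
  written with 0-based row index k < N and column index l < N.\<close>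
definition vandermonde :: "nat \<Rightarrow> (nat \<Rightarrow> real) \<Rightarrow> complex mat" where
  "vandermonde N \<theta> = mat N N (\<lambda>(k, l).
      exp (- \<i> * of_nat k * complex_of_real (\<theta> l)) / complex_of_real (sqrt (real N)))"

definition largest_eigenvalue :: "complex mat \<Rightarrow> real" where
  "largest_eigenvalue A = Max {x :: real. eigenvalue A (complex_of_real x)}"

definition lambda_max :: "nat \<Rightarrow> (nat \<Rightarrow> real) \<Rightarrow> real" where
  "lambda_max N \<theta> = largest_eigenvalue (mat_adjoint (vandermonde N \<theta>) * vandermonde N \<theta>)"

definition Linf_norm :: "(real \<Rightarrow> real) \<Rightarrow> real" where
  "Linf_norm f = real_of_ereal (esssup lborel (\<lambda>x. ereal \<bar>f x\<bar>))"

end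

theory Submission
  imports Defs "HOL-Computational_Algebra.Fundamental_Theorem_Algebra"
begin

no_notation vec_nth (infixl \<open>$\<close> 90)


lemma sin_jordan:
  fixes y :: real
  assumes "0 \<le> y" "y \<le> pi/2"
  shows "2 * y / pi \<le> sin y"
proof -
  have conc: "concave_on {0..pi/2} sin"
    by (rule f''_le0_imp_concave[where f'=cos and f''="\<lambda>x. - sin x"])
       (auto intro!: derivative_eq_intros simp: sin_ge_zero)
  have "sin y \<ge> (sin (pi/2) - sin 0) / (pi/2 - 0) * (y - 0) + sin 0"
    using concave_onD_Icc'[OF conc, of y] assms by simp
  then show ?thesis by (simp add: field_simps)
qed

definition hk :: "nat \<Rightarrow> real \<Rightarrow> real" where
  "hk N x = cmod (\<Sum>k<N. cis (real k * x)) / real N"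

definition psi :: "nat \<Rightarrow> real \<Rightarrow> real" where
  "psi N u = (if \<bar>u\<bar> \<le> pi / real N then 1 else pi / (real N * \<bar>u\<bar>))"

lemma hk_nonneg: "0 \<le> hk N x"
  by (simp add: hk_def)

lemma hk_le1: "hk N x \<le> 1"
proof (cases "N = 0")
  case False
  have "cmod (\<Sum>k<N. cis (real k * x)) \<le> (\<Sum>k<N. cmod (cis (real k * x)))"
    by (rule norm_sum)
  also have "\<dots> = real N" by simp
  finally show ?thesis using False by (simp add: hk_def field_simps)
qed (simp add: hk_def)

lemma cis_minus_one_norm: "cmod (cis x - 1) = 2 * \<bar>sin (x/2)\<bar>"
proof -
  have "cis x - 1 = cis (x/2) * (cis (x/2) - cis (-(x/2)))"
    by (simp add: algebra_simps cis_mult flip: cis_divide)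
  also have "cis (x/2) - cis (-(x/2)) = 2 * \<i> * complex_of_real (sin (x/2))"
    by (simp add: complex_eq_iff)
  finally have "cis x - 1 = cis (x/2) * (2 * \<i> * complex_of_real (sin (x/2)))" .
  then show ?thesis by (simp add: norm_mult)
qed

lemma hk_bound:
  assumes "\<bar>x\<bar> \<le> pi" "x \<noteq> 0" "N > 0"
  shows "hk N x \<le> pi / (real N * \<bar>x\<bar>)"
proof -
  define z where "z = cis x"
  have sumeq: "(\<Sum>k<N. cis (real k * x)) = (\<Sum>k<N. z ^ k)"
    by (rule sum.cong) (simp_all only: z_def Complex.DeMoivre)
  have "z ^ N - 1 = (z - 1) * (\<Sum>k<N. z ^ k)" by (rule power_diff_1_eq)
  hence "cmod (z - 1) * cmod (\<Sum>k<N. z ^ k) = cmod (z ^ N - 1)" by (simp add: norm_mult)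
  also have "\<dots> \<le> cmod (z ^ N) + cmod 1" by (rule norm_triangle_ineq4)
  also have "\<dots> = 2" by (simp add: z_def norm_power)
  finally have A: "2 * \<bar>sin (x/2)\<bar> * cmod (\<Sum>k<N. z ^ k) \<le> 2"
    by (simp add: z_def cis_minus_one_norm)
  have "2 * (\<bar>x\<bar>/2) / pi \<le> sin (\<bar>x\<bar>/2)"
    using assms by (intro sin_jordan) auto
  moreover have "sin (\<bar>x\<bar>/2) = \<bar>sin (x/2)\<bar>"
  proof (cases "x \<ge> 0")
    case True
    have "0 \<le> sin (x/2)" using assms True by (intro sin_ge_zero) auto
    thus ?thesis using True by simp
  next
    case False
    have "0 \<le> sin (-x/2)" using assms False by (intro sin_ge_zero) auto
    thus ?thesis using False by (simp add: sin_minus)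
  qed
  ultimately have B: "\<bar>x\<bar> / pi \<le> \<bar>sin (x/2)\<bar>" by simp
  have xpos: "\<bar>x\<bar> > 0" using assms by simp
  have "\<bar>x\<bar> / pi * cmod (\<Sum>k<N. z ^ k) \<le> \<bar>sin (x/2)\<bar> * cmod (\<Sum>k<N. z ^ k)"
    using B by (intro mult_right_mono) auto
  also have "\<dots> \<le> 1" using A by simp
  finally have C: "cmod (\<Sum>k<N. z ^ k) \<le> pi / \<bar>x\<bar>"
    using xpos by (simp add: field_simps)
  have "hk N x = cmod (\<Sum>k<N. z ^ k) / real N" by (simp only: hk_def sumeq)
  also have "\<dots> \<le> (pi / \<bar>x\<bar>) / real N" by (intro divide_right_mono C) simp
  also have "\<dots> = pi / (real N * \<bar>x\<bar>)" by simp
  finally show ?thesis .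
qed

lemma hk_le_psi:
  assumes "\<bar>x\<bar> \<le> pi" "N > 0"
  shows "hk N x \<le> psi N x"
proof (cases "\<bar>x\<bar> \<le> pi / real N")
  case True thus ?thesis by (simp add: psi_def hk_le1)
next
  case False
  hence "x \<noteq> 0" using assms by auto
  thus ?thesis using False hk_bound[OF assms(1) _ assms(2)] by (simp add: psi_def)
qed

lemma psi_nonneg: "0 \<le> psi N x"
  by (simp add: psi_def)

lemma hk_periodic: "hk N (x + 2 * pi) = hk N x"
proof -
  have "cis (real k * (x + 2 * pi)) = cis (real k * x)" for k
  proof -
    have "cis (x + 2*pi) = cis x" by (simp add: complex_eq_iff)
    have "cis (real k * (x + 2 * pi)) = cis (x + 2*pi) ^ k" by (simp only: Complex.DeMoivre)
    also have "\<dots> = cis x ^ k" using \<open>cis (x + 2*pi) = cis x\<close> by simp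
    also have "\<dots> = cis (real k * x)" by (simp only: Complex.DeMoivre)
    finally show ?thesis .
  qed
  thus ?thesis by (simp add: hk_def)
qed

lemma hk_le_psi3:
  assumes "\<bar>x\<bar> \<le> 2 * pi" "N > 0"
  shows "hk N x \<le> psi N x + psi N (x - 2 * pi) + psi N (x + 2 * pi)"
proof -
  consider "\<bar>x\<bar> \<le> pi" | "x > pi" | "x < - pi" by linarith
  then show ?thesis
  proof cases
    case 1 thus ?thesis using hk_le_psi[OF 1 assms(2)] psi_nonneg[of N] by (smt (verit))
  next
    case 2
    have "hk N x = hk N (x - 2*pi)" using hk_periodic[of N "x - 2*pi"] by simp
    also have "\<dots> \<le> psi N (x - 2*pi)" using 2 assms by (intro hk_le_psi) auto
    finally show ?thesis using psi_nonneg[of N] by (smt (verit))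
  next
    case 3
    have "hk N x = hk N (x + 2*pi)" using hk_periodic[of N x] by simp
    also have "\<dots> \<le> psi N (x + 2*pi)" using 3 assms by (intro hk_le_psi) auto
    finally show ?thesis using psi_nonneg[of N] by (smt (verit))
  qed
qed





definition Gm :: "nat \<Rightarrow> (nat \<Rightarrow> real) \<Rightarrow> nat \<Rightarrow> nat \<Rightarrow> complex" where
  "Gm N \<theta> l m = (\<Sum>k<N. cis (real k * (\<theta> l - \<theta> m))) / of_nat N"

lemma vdm_carrier: "vandermonde N \<theta> \<in> carrier_mat N N"
  by (simp add: vandermonde_def)

lemma G_carrier: "mat_adjoint (vandermonde N \<theta>) * vandermonde N \<theta> \<in> carrier_mat N N"
proof -
  have "mat_adjoint (vandermonde N \<theta>) \<in> carrier_mat N N"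
    unfolding mat_adjoint_def using mat_of_rows_carrier[of N "map conjugate (cols (vandermonde N \<theta>))"]
    by (simp add: vandermonde_def)
  thus ?thesis using vdm_carrier by (rule mult_carrier_mat)
qed

lemma vdm_index: "k < N \<Longrightarrow> l < N \<Longrightarrow> vandermonde N \<theta> $$ (k, l) =
   exp (- \<i> * of_nat k * complex_of_real (\<theta> l)) / complex_of_real (sqrt (real N))"
  by (simp add: vandermonde_def)

lemma vdm_term:
  assumes "N > 0"
  shows "cnj (exp (- \<i> * of_nat k * complex_of_real a) / complex_of_real (sqrt (real N))) *
     (exp (- \<i> * of_nat k * complex_of_real b) / complex_of_real (sqrt (real N)))
   = cis (real k * (a - b)) / of_nat N"
proof -
  have e: "exp (- \<i> * of_nat k * complex_of_real t) = cis (- (real k * t))" for t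
    by (simp add: cis_conv_exp algebra_simps)
  have s: "complex_of_real (sqrt (real N)) * complex_of_real (sqrt (real N)) = of_nat N"
    by (simp flip: of_real_mult)
  show ?thesis
    unfolding e using assms
    by (simp add: cis_cnj cis_mult s algebra_simps flip: times_divide_times_eq)
qed

lemma G_index:
  assumes "l < N" "m < N"
  shows "(mat_adjoint (vandermonde N \<theta>) * vandermonde N \<theta>) $$ (l, m) = Gm N \<theta> l m"
proof -
  have N: "N > 0" using assms by simp
  have "(mat_adjoint (vandermonde N \<theta>) * vandermonde N \<theta>) $$ (l, m)
     = (\<Sum>k<N. cnj (vandermonde N \<theta> $$ (k, l)) * vandermonde N \<theta> $$ (k, m))"
    using assms by (simp add: mat_adjoint_def vandermonde_def scalar_prod_def mat_of_rows_index
         lessThan_atLeast0 cols_def)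
  also have "\<dots> = (\<Sum>k<N. cis (real k * (\<theta> l - \<theta> m)) / of_nat N)"
  proof (intro sum.cong refl)
    fix k assume "k \<in> {..<N}"
    hence k: "k < N" by simp
    show "cnj (vandermonde N \<theta> $$ (k, l)) * vandermonde N \<theta> $$ (k, m) = cis (real k * (\<theta> l - \<theta> m)) / of_nat N"
      unfolding vdm_index[OF k assms(1)] vdm_index[OF k assms(2)] by (rule vdm_term[OF N])
  qed
  also have "\<dots> = Gm N \<theta> l m" by (simp add: Gm_def sum_divide_distrib)
  finally show ?thesis .
qed

lemma Gm_norm: "N > 0 \<Longrightarrow> cmod (Gm N \<theta> l m) = hk N (\<theta> l - \<theta> m)"
  by (simp add: Gm_def hk_def norm_divide)

lemma Gm_herm: "cnj (Gm N \<theta> l m) = Gm N \<theta> m l"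
proof -
  have "cnj (cis (real k * (\<theta> l - \<theta> m))) = cis (real k * (\<theta> m - \<theta> l))" for k
    by (simp add: cis_cnj algebra_simps)
  thus ?thesis by (simp add: Gm_def)
qed

definition S :: "nat \<Rightarrow> (nat \<Rightarrow> real) \<Rightarrow> nat \<Rightarrow> real" where
  "S N \<theta> l = (\<Sum>m<N. hk N (\<theta> l - \<theta> m))"

lemma G_mult_vec:
  assumes "v \<in> carrier_vec N" "l < N"
  shows "((mat_adjoint (vandermonde N \<theta>) * vandermonde N \<theta>) *\<^sub>v v) $ l = (\<Sum>m<N. Gm N \<theta> l m * v $ m)"
proof -
  let ?G = "mat_adjoint (vandermonde N \<theta>) * vandermonde N \<theta>"
  have G: "?G \<in> carrier_mat N N" by (rule G_carrier)
  have "(?G *\<^sub>v v) $ l = row ?G l \<bullet> v" using G assms by (intro index_mult_mat_vec) auto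
  also have "\<dots> = (\<Sum>m<N. ?G $$ (l, m) * v $ m)"
  proof -
    have d: "dim_row ?G = N" "dim_col ?G = N" using G by auto
    have "row ?G l \<bullet> v = (\<Sum>m<N. row ?G l $ m * v $ m)"
      using assms by (simp add: scalar_prod_def lessThan_atLeast0)
    also have "\<dots> = (\<Sum>m<N. ?G $$ (l, m) * v $ m)"
    proof (intro sum.cong refl)
      fix m assume "m \<in> {..<N}"
      hence "row ?G l $ m = ?G $$ (l, m)" using index_row(1)[of l ?G m] d assms by simp
      thus "row ?G l $ m * v $ m = ?G $$ (l, m) * v $ m" by simp
    qed
    finally show ?thesis .
  qed
  also have "\<dots> = (\<Sum>m<N. Gm N \<theta> l m * v $ m)"
    using assms by (intro sum.cong refl) (simp add: G_index)
  finally show ?thesis .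
qed

lemma eigen_vec:
  assumes "eigenvalue (mat_adjoint (vandermonde N \<theta>) * vandermonde N \<theta>) z"
  obtains v where "v \<in> carrier_vec N" "\<exists>m<N. v $ m \<noteq> 0"
    "\<And>l. l < N \<Longrightarrow> z * v $ l = (\<Sum>m<N. Gm N \<theta> l m * v $ m)"
proof -
  let ?G = "mat_adjoint (vandermonde N \<theta>) * vandermonde N \<theta>"
  have G: "?G \<in> carrier_mat N N" by (rule G_carrier)
  obtain v where v: "v \<in> carrier_vec N" "v \<noteq> 0\<^sub>v N" "?G *\<^sub>v v = z \<cdot>\<^sub>v v"
    using assms G unfolding eigenvalue_def eigenvector_def by auto
  have "\<exists>m<N. v $ m \<noteq> 0"
  proof (rule ccontr)
    assume "\<not> ?thesis"
    hence "v = 0\<^sub>v N" using v(1) by (intro eq_vecI) auto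
    thus False using v(2) by simp
  qed
  moreover have "z * v $ l = (\<Sum>m<N. Gm N \<theta> l m * v $ m)" if "l < N" for l
  proof -
    have "z * v $ l = (z \<cdot>\<^sub>v v) $ l" using v(1) that by simp
    also have "\<dots> = (?G *\<^sub>v v) $ l" using v(3) by simp
    also have "\<dots> = (\<Sum>m<N. Gm N \<theta> l m * v $ m)" by (rule G_mult_vec[OF v(1) that])
    finally show ?thesis .
  qed
  ultimately show ?thesis using that v(1) by blast
qed

lemma gersh:
  assumes "eigenvalue (mat_adjoint (vandermonde N \<theta>) * vandermonde N \<theta>) z"
  shows "\<exists>l<N. cmod z \<le> S N \<theta> l"
proof -
  obtain v where v: "v \<in> carrier_vec N" "\<exists>m<N. v $ m \<noteq> 0"
    "\<And>l. l < N \<Longrightarrow> z * v $ l = (\<Sum>m<N. Gm N \<theta> l m * v $ m)"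
    using eigen_vec[OF assms] by blast
  have N: "N > 0" using v(2) by auto
  define M where "M = Max ((\<lambda>m. cmod (v $ m)) ` {..<N})"
  have fin: "finite ((\<lambda>m. cmod (v $ m)) ` {..<N})" by simp
  have ne: "(\<lambda>m. cmod (v $ m)) ` {..<N} \<noteq> {}" using N by auto
  obtain l where l: "l < N" "cmod (v $ l) = M" using Max_in[OF fin ne] unfolding M_def by auto
  have ge: "cmod (v $ m) \<le> cmod (v $ l)" if "m < N" for m
    using Max_ge[OF fin, of "cmod (v $ m)"] that l(2) unfolding M_def by auto
  obtain m0 where "m0 < N" "v $ m0 \<noteq> 0" using v(2) by auto
  hence pos: "cmod (v $ l) > 0" using ge[of m0] by (smt (verit) zero_less_norm_iff)
  have "cmod z * cmod (v $ l) = cmod (\<Sum>m<N. Gm N \<theta> l m * v $ m)"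
    using v(3)[OF l(1)] by (metis norm_mult)
  also have "\<dots> \<le> (\<Sum>m<N. cmod (Gm N \<theta> l m * v $ m))" by (rule norm_sum)
  also have "\<dots> \<le> (\<Sum>m<N. hk N (\<theta> l - \<theta> m) * cmod (v $ l))"
  proof (intro sum_mono)
    fix m assume "m \<in> {..<N}"
    thus "cmod (Gm N \<theta> l m * v $ m) \<le> hk N (\<theta> l - \<theta> m) * cmod (v $ l)"
      using ge[of m] N by (simp add: norm_mult Gm_norm hk_nonneg mult_left_mono)
  qed
  also have "\<dots> = S N \<theta> l * cmod (v $ l)" by (simp add: S_def sum_distrib_right)
  finally have "cmod z \<le> S N \<theta> l" using pos by simp
  thus ?thesis using l(1) by blast
qed

lemma eig_finite:
  "finite {x :: real. eigenvalue (mat_adjoint (vandermonde N \<theta>) * vandermonde N \<theta>) (complex_of_real x)}"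
proof -
  let ?G = "mat_adjoint (vandermonde N \<theta>) * vandermonde N \<theta>"
  have G: "?G \<in> carrier_mat N N" by (rule G_carrier)
  have "char_poly ?G \<noteq> 0"
    using degree_monic_char_poly[OF G] by auto
  hence fin: "finite {k. poly (char_poly ?G) k = 0}" by (rule poly_roots_finite)
  have "{x :: real. eigenvalue ?G (complex_of_real x)} \<subseteq> Re ` {k. poly (char_poly ?G) k = 0}"
  proof
    fix x assume "x \<in> {x :: real. eigenvalue ?G (complex_of_real x)}"
    hence "complex_of_real x \<in> {k. poly (char_poly ?G) k = 0}"
      using eigenvalue_root_char_poly[OF G] by auto
    thus "x \<in> Re ` {k. poly (char_poly ?G) k = 0}" by (metis Re_complex_of_real image_eqI)
  qed
  thus ?thesis using fin finite_subset by blast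
qed

lemma eig_real:
  assumes "eigenvalue (mat_adjoint (vandermonde N \<theta>) * vandermonde N \<theta>) z"
  shows "Im z = 0"
proof -
  obtain v where v: "v \<in> carrier_vec N" "\<exists>m<N. v $ m \<noteq> 0"
    "\<And>l. l < N \<Longrightarrow> z * v $ l = (\<Sum>m<N. Gm N \<theta> l m * v $ m)"
    using eigen_vec[OF assms] by blast
  define Q where "Q = (\<Sum>l<N. \<Sum>m<N. cnj (v $ l) * Gm N \<theta> l m * v $ m)"
  define R where "R = (\<Sum>l<N. (cmod (v $ l))\<^sup>2)"
  have "Q = (\<Sum>l<N. cnj (v $ l) * (z * v $ l))"
    unfolding Q_def using v(3) by (simp add: sum_distrib_left mult.assoc)
  also have "\<dots> = z * complex_of_real R"
    unfolding R_def of_real_sum sum_distrib_left complex_norm_square by (simp add: mult_ac)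
  finally have QR: "Q = z * complex_of_real R" .
  have "cnj Q = (\<Sum>l<N. \<Sum>m<N. v $ l * Gm N \<theta> m l * cnj (v $ m))"
    unfolding Q_def by (simp add: Gm_herm)
  also have "\<dots> = Q"
    unfolding Q_def by (subst sum.swap) (simp add: mult_ac)
  finally have "Im Q = 0" by (metis cnj.sel(2) neg_equal_zero)
  obtain m0 where m0: "m0 < N" "v $ m0 \<noteq> 0" using v(2) by auto
  have "R \<ge> (cmod (v $ m0))\<^sup>2" unfolding R_def
    using m0 by (intro member_le_sum) auto
  moreover have "(cmod (v $ m0))\<^sup>2 > 0" using m0 by simp
  ultimately have "R > 0" by linarith
  with \<open>Im Q = 0\<close> QR show ?thesis by simp
qed

lemma eig_nonempty:
  assumes "N > 0"
  shows "\<exists>x :: real. eigenvalue (mat_adjoint (vandermonde N \<theta>) * vandermonde N \<theta>) (complex_of_real x)"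
proof -
  let ?G = "mat_adjoint (vandermonde N \<theta>) * vandermonde N \<theta>"
  have G: "?G \<in> carrier_mat N N" by (rule G_carrier)
  have "degree (char_poly ?G) = N" using degree_monic_char_poly[OF G] by auto
  hence "\<not> constant (poly (char_poly ?G))" using assms by (simp add: constant_degree)
  then obtain z where "poly (char_poly ?G) z = 0" using fundamental_theorem_of_algebra by blast
  hence ev: "eigenvalue ?G z" using eigenvalue_root_char_poly[OF G] by auto
  hence "Im z = 0" by (rule eig_real)
  hence "z = complex_of_real (Re z)" by (simp add: complex_eq_iff)
  thus ?thesis using ev by metis
qed

lemma lambda_le_S:
  assumes "N > 0"
  shows "\<exists>l<N. lambda_max N \<theta> \<le> S N \<theta> l"
proof -
  let ?G = "mat_adjoint (vandermonde N \<theta>) * vandermonde N \<theta>"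
  let ?E = "{x :: real. eigenvalue ?G (complex_of_real x)}"
  have "Max ?E \<in> ?E" using eig_finite eig_nonempty[OF assms] by (intro Max_in) auto
  hence "eigenvalue ?G (complex_of_real (Max ?E))" by simp
  from gersh[OF this] obtain l where "l < N" "cmod (complex_of_real (Max ?E)) \<le> S N \<theta> l" by blast
  thus ?thesis unfolding lambda_max_def largest_eigenvalue_def by auto
qed



lemma psi_int:
  assumes N: "N > 0"
  shows "(\<integral>\<^sup>+u. ennreal (psi N u) * indicator {-4*pi..4*pi} u \<partial>lborel)
     \<le> ennreal (2*pi/real N*(1 + ln (4 * real N)))"
proof -
  define c where "c = pi / real N"
  have c0: "c > 0" using N by (simp add: c_def)
  have c1: "c \<le> pi" using N by (simp add: c_def field_simps)
  have lnc: "ln (4*pi) - ln c = ln (4 * real N)"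
    using N c0 by (simp add: c_def ln_div ln_mult)
  have ln0: "0 \<le> ln (4 * real N)" using N by simp
  have pw: "ennreal (psi N u) * indicator {-4*pi..4*pi} u \<le>
      indicator {-c..c} u + ennreal (c / u) * indicator {c..4*pi} u
      + ennreal (c / (- u)) * indicator {-4*pi..-c} u" for u
  proof (cases "\<bar>u\<bar> \<le> c")
    case True
    hence "psi N u = 1" by (simp add: psi_def c_def)
    thus ?thesis using True by (auto split: split_indicator)
  next
    case False
    hence ps: "psi N u = c / \<bar>u\<bar>" by (simp add: psi_def c_def)
    show ?thesis
    proof (cases "u > 0")
      case True thus ?thesis using False ps by (auto split: split_indicator)
    next
      case False' : False
      thus ?thesis using False ps by (auto split: split_indicator)
    qed
  qed
  have I1: "(\<integral>\<^sup>+u. indicator {-c..c} u \<partial>lborel) = ennreal (2*c)"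
    using c0 by simp
  have I2: "(\<integral>\<^sup>+u. ennreal (c / u) * indicator {c..4*pi} u \<partial>lborel) = ennreal (c * ln (4 * real N))"
  proof -
    have "(\<integral>\<^sup>+u. ennreal (c / u) * indicator {c..4*pi} u \<partial>lborel) = ennreal (c * ln (4*pi) - c * ln c)"
      using c0 c1
      by (intro nn_integral_FTC_Icc[where F="\<lambda>u. c * ln u"])
         (auto intro!: derivative_eq_intros simp: field_simps)
    thus ?thesis using lnc by (simp add: right_diff_distrib[symmetric])
  qed
  have I3: "(\<integral>\<^sup>+u. ennreal (c / (- u)) * indicator {-4*pi..-c} u \<partial>lborel) = ennreal (c * ln (4 * real N))"
  proof -
    have "(\<integral>\<^sup>+u. ennreal (c / (- u)) * indicator {-4*pi..-c} u \<partial>lborel) = ennreal ((\<lambda>u. - c * ln (- u)) (-c) - (\<lambda>u. - c * ln (- u)) (-4*pi))"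
      using c0 c1
      by (intro nn_integral_FTC_Icc[where F="\<lambda>u. - c * ln (- u)" and f="\<lambda>u. c / (- u)" and a="-4*pi" and b="-c"])
         (auto intro!: derivative_eq_intros simp: field_simps)
    also have "(\<lambda>u. - c * ln (- u)) (-c) - (\<lambda>u. - c * ln (- u)) (-4*pi) = c * ln (4 * real N)"
      using lnc by (simp add: algebra_simps)
    finally show ?thesis .
  qed
  have "(\<integral>\<^sup>+u. ennreal (psi N u) * indicator {-4*pi..4*pi} u \<partial>lborel)
     \<le> (\<integral>\<^sup>+u. indicator {-c..c} u + ennreal (c / u) * indicator {c..4*pi} u
      + ennreal (c / (- u)) * indicator {-4*pi..-c} u \<partial>lborel)"
    by (intro nn_integral_mono pw)
  also have "\<dots> = ennreal (2*c) + ennreal (c * ln (4 * real N)) + ennreal (c * ln (4 * real N))"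
    by (subst nn_integral_add, simp, simp)+ (simp only: I1 I2 I3)
  also have "\<dots> = ennreal (2*pi/real N*(1 + ln (4 * real N)))"
    using c0 ln0 by (simp add: c_def flip: ennreal_plus) (simp add: add_divide_distrib algebra_simps)
  finally show ?thesis .
qed

lemma psi_meas[measurable]: "psi N \<in> borel_measurable borel"
  unfolding psi_def[abs_def] by measurable

lemma hk_cont: "continuous_on UNIV (hk N)"
proof (cases "N = 0")
  case True thus ?thesis by (simp add: hk_def[abs_def])
next
  case False thus ?thesis unfolding hk_def[abs_def] by (intro continuous_intros) auto
qed

lemma hk_meas[measurable]: "hk N \<in> borel_measurable borel"
  by (rule borel_measurable_continuous_onI[OF hk_cont])

lemma window_int:
  assumes N: "N > 0" and y: "y \<in> {-pi..pi}"
  shows "(\<integral>\<^sup>+s. ennreal (hk N (y - s)) * indicator {-pi..pi} s \<partial>lborel)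
     \<le> ennreal (2*pi/real N*(1 + ln (4 * real N)))"
proof -
  define Psi where "Psi u = psi N u + psi N (u - 2*pi) + psi N (u + 2*pi)" for u
  have Psi_meas[measurable]: "Psi \<in> borel_measurable borel" unfolding Psi_def[abs_def] by measurable
  have "(\<integral>\<^sup>+s. ennreal (hk N (y - s)) * indicator {-pi..pi} s \<partial>lborel)
      \<le> (\<integral>\<^sup>+s. ennreal (Psi (y - s)) * indicator {-pi..pi} s \<partial>lborel)"
  proof (intro nn_integral_mono)
    fix s
    show "ennreal (hk N (y - s)) * indicator {-pi..pi} s \<le> ennreal (Psi (y - s)) * indicator {-pi..pi} s"
    proof (cases "s \<in> {-pi..pi}")
      case True
      hence "\<bar>y - s\<bar> \<le> 2 * pi" using y by auto
      hence "hk N (y - s) \<le> Psi (y - s)" unfolding Psi_def using hk_le_psi3 N by blast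
      thus ?thesis using True by (simp add: ennreal_leI)
    qed simp
  qed
  also have "\<dots> = (\<integral>\<^sup>+u. ennreal (Psi u) * indicator {-pi..pi} (y - u) \<partial>lborel)"
    using nn_integral_real_affine[of "\<lambda>u. ennreal (Psi u) * indicator {-pi..pi} (y - u)" "-1" y]
    by simp
  also have "\<dots> = (\<integral>\<^sup>+u. ennreal (psi N u) * indicator {-pi..pi} (y - u) \<partial>lborel)
      + (\<integral>\<^sup>+u. ennreal (psi N (u - 2*pi)) * indicator {-pi..pi} (y - u) \<partial>lborel)
      + (\<integral>\<^sup>+u. ennreal (psi N (u + 2*pi)) * indicator {-pi..pi} (y - u) \<partial>lborel)"
  proof -
    have "(\<integral>\<^sup>+u. ennreal (Psi u) * indicator {-pi..pi} (y - u) \<partial>lborel)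
       = (\<integral>\<^sup>+u. ennreal (psi N u) * indicator {-pi..pi} (y - u)
            + ennreal (psi N (u - 2*pi)) * indicator {-pi..pi} (y - u)
            + ennreal (psi N (u + 2*pi)) * indicator {-pi..pi} (y - u) \<partial>lborel)"
      by (intro nn_integral_cong)
         (auto simp: Psi_def psi_nonneg add_nonneg_nonneg ennreal_plus split: split_indicator)
    also have "\<dots> = (\<integral>\<^sup>+u. ennreal (psi N u) * indicator {-pi..pi} (y - u) \<partial>lborel)
      + (\<integral>\<^sup>+u. ennreal (psi N (u - 2*pi)) * indicator {-pi..pi} (y - u) \<partial>lborel)
      + (\<integral>\<^sup>+u. ennreal (psi N (u + 2*pi)) * indicator {-pi..pi} (y - u) \<partial>lborel)"
      by (subst nn_integral_add, simp, simp)+ (rule refl)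
    finally show ?thesis .
  qed
  also have "(\<integral>\<^sup>+u. ennreal (psi N (u - 2*pi)) * indicator {-pi..pi} (y - u) \<partial>lborel)
      = (\<integral>\<^sup>+u. ennreal (psi N u) * indicator {-pi..pi} (y - u - 2*pi) \<partial>lborel)"
    using nn_integral_real_affine[of "\<lambda>u. ennreal (psi N (u - 2*pi)) * indicator {-pi..pi} (y - u)" 1 "2*pi"]
    by (simp add: algebra_simps)
  also have "(\<integral>\<^sup>+u. ennreal (psi N (u + 2*pi)) * indicator {-pi..pi} (y - u) \<partial>lborel)
      = (\<integral>\<^sup>+u. ennreal (psi N u) * indicator {-pi..pi} (y - u + 2*pi) \<partial>lborel)"
    using nn_integral_real_affine[of "\<lambda>u. ennreal (psi N (u + 2*pi)) * indicator {-pi..pi} (y - u)" 1 "-2*pi"]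
    by (simp add: algebra_simps)
  also have "(\<integral>\<^sup>+u. ennreal (psi N u) * indicator {-pi..pi} (y - u) \<partial>lborel)
      + (\<integral>\<^sup>+u. ennreal (psi N u) * indicator {-pi..pi} (y - u - 2*pi) \<partial>lborel)
      + (\<integral>\<^sup>+u. ennreal (psi N u) * indicator {-pi..pi} (y - u + 2*pi) \<partial>lborel)
      = (\<integral>\<^sup>+u. ennreal (psi N u) * indicator {-pi..pi} (y - u)
          + ennreal (psi N u) * indicator {-pi..pi} (y - u - 2*pi)
          + ennreal (psi N u) * indicator {-pi..pi} (y - u + 2*pi) \<partial>lborel)"
    by (subst nn_integral_add, simp, simp)+ (rule refl)
  also have "\<dots> \<le> (\<integral>\<^sup>+u. ennreal (psi N u) * indicator {-4*pi..4*pi} u \<partial>lborel)"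
  proof (intro nn_integral_mono_AE)
    have "AE u in lborel. u \<noteq> y - pi" by (rule AE_lborel_singleton)
    moreover have "AE u in lborel. u \<noteq> y + pi" by (rule AE_lborel_singleton)
    ultimately show "AE u in lborel. ennreal (psi N u) * indicator {-pi..pi} (y - u)
          + ennreal (psi N u) * indicator {-pi..pi} (y - u - 2*pi)
          + ennreal (psi N u) * indicator {-pi..pi} (y - u + 2*pi)
         \<le> ennreal (psi N u) * indicator {-4*pi..4*pi} u"
    proof eventually_elim
      case (elim u)
      show ?case using elim y by (auto split: split_indicator)
    qed
  qed
  also have "\<dots> \<le> ennreal (2*pi/real N*(1 + ln (4 * real N)))" by (rule psi_int[OF N])
  finally show ?thesis .
qed



definition JN :: "nat \<Rightarrow> real" where "JN N = 2*pi/real N*(1 + ln (4 * real N))"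

lemma exp_convex_bound:
  fixes h :: real assumes "0 \<le> h" "h \<le> 1"
  shows "exp h \<le> 1 + (exp 1 - 1) * h"
proof -
  have "exp ((1 - h) *\<^sub>R 0 + h *\<^sub>R 1) \<le> (1 - h) * exp 0 + h * exp 1"
    using assms by (intro convex_onD[OF exp_convex]) auto
  thus ?thesis by (simp add: algebra_simps)
qed

context
  fixes f :: "real \<Rightarrow> real"
  assumes f_meas[measurable]: "f \<in> borel_measurable lborel"
    and f_nonneg: "\<And>x. f x \<ge> 0"
    and f_supp: "\<And>x. x \<notin> {-pi..pi} \<Longrightarrow> f x = 0"
    and f_prob: "prob_space (density lborel f)"
    and f_bdd: "\<exists>B. \<forall>x. \<bar>f x\<bar> \<le> B"
begin

lemma K_AE: "AE x in lborel. f x \<le> Linf_norm f"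
proof -
  obtain B where B: "\<And>x. \<bar>f x\<bar> \<le> B" using f_bdd by blast
  define g where "g x = ereal \<bar>f x\<bar>" for x
  have gm: "g \<in> borel_measurable lborel" unfolding g_def[abs_def] by measurable
  define E where "E = esssup lborel g"
  have EB: "E \<le> ereal B" unfolding E_def using B gm by (intro esssup_I) (auto simp: g_def)
  have AE: "AE x in lborel. g x \<le> E" unfolding E_def by (rule esssup_AE)
  have Eninf: "E \<noteq> - \<infinity>"
  proof
    assume "E = - \<infinity>"
    with AE have "AE x in (lborel::real measure). False" by (simp add: g_def)
    hence "ae_filter (lborel::real measure) = bot" using trivial_limit_def by blast
    hence "emeasure (lborel::real measure) (space lborel) = 0" by (simp add: ae_filter_eq_bot_iff)
    thus False by simp
  qed
  have "E = ereal (real_of_ereal E)"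
    using Eninf EB by (cases E) auto
  moreover have "real_of_ereal E = Linf_norm f"
    unfolding Linf_norm_def E_def g_def by simp
  ultimately have EK: "E = ereal (Linf_norm f)" by simp
  from AE show ?thesis by eventually_elim (use EK in \<open>auto simp: g_def\<close>)
qed

lemma K_pos: "Linf_norm f > 0"
proof (rule ccontr)
  assume "\<not> ?thesis"
  hence K0: "Linf_norm f \<le> 0" by simp
  from K_AE have "AE x in lborel. f x \<le> 0" by eventually_elim (use K0 in auto)
  hence "AE x in lborel. ennreal (f x) * indicator UNIV x = 0"
    by eventually_elim (use f_nonneg in \<open>auto simp: antisym\<close>)
  hence "emeasure (density lborel f) UNIV = 0"
    by (simp add: emeasure_density nn_integral_0_iff_AE del: indicator_UNIV)
  moreover have "emeasure (density lborel f) (space (density lborel f)) = 1"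
    using prob_space.emeasure_space_1[OF f_prob] .
  ultimately show False by simp
qed

lemma factor_bound:
  assumes N: "N > 0" and y: "y \<in> {-pi..pi}"
  shows "(\<integral>\<^sup>+s. ennreal (exp (hk N (y - s))) \<partial>density lborel f)
     \<le> ennreal (exp ((exp 1 - 1) * Linf_norm f * JN N))"
proof -
  let ?K = "Linf_norm f"
  have K0: "?K \<ge> 0" using K_pos by simp
  have sp: "emeasure (density lborel f) (space (density lborel f)) = 1"
    using prob_space.emeasure_space_1[OF f_prob] .
  have e1: "exp 1 - 1 \<ge> (0::real)" by simp
  have "(\<integral>\<^sup>+s. ennreal (exp (hk N (y - s))) \<partial>density lborel f)
      \<le> (\<integral>\<^sup>+s. 1 + ennreal (exp 1 - 1) * ennreal (hk N (y - s)) \<partial>density lborel f)"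
  proof (intro nn_integral_mono)
    fix s
    have "exp (hk N (y - s)) \<le> 1 + (exp 1 - 1) * hk N (y - s)"
      by (intro exp_convex_bound hk_nonneg hk_le1)
    hence "ennreal (exp (hk N (y - s))) \<le> ennreal (1 + (exp 1 - 1) * hk N (y - s))"
      by (rule ennreal_leI)
    also have "\<dots> = 1 + ennreal (exp 1 - 1) * ennreal (hk N (y - s))"
      using e1 hk_nonneg[of N] by (simp add: ennreal_plus ennreal_mult)
    finally show "ennreal (exp (hk N (y - s))) \<le> 1 + ennreal (exp 1 - 1) * ennreal (hk N (y - s))" .
  qed
  also have "\<dots> = 1 + ennreal (exp 1 - 1) * (\<integral>\<^sup>+s. ennreal (hk N (y - s)) \<partial>density lborel f)"
    using sp by (subst nn_integral_add) (auto simp: nn_integral_cmult)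
  also have "(\<integral>\<^sup>+s. ennreal (hk N (y - s)) \<partial>density lborel f)
      = (\<integral>\<^sup>+s. ennreal (f s) * ennreal (hk N (y - s)) \<partial>lborel)"
    by (subst nn_integral_density) auto
  also have "\<dots> \<le> (\<integral>\<^sup>+s. ennreal ?K * (ennreal (hk N (y - s)) * indicator {-pi..pi} s) \<partial>lborel)"
  proof (intro nn_integral_mono_AE)
    show "AE s in lborel. ennreal (f s) * ennreal (hk N (y - s))
        \<le> ennreal ?K * (ennreal (hk N (y - s)) * indicator {-pi..pi} s)"
      using K_AE
    proof eventually_elim
      case (elim s)
      show ?case
      proof (cases "s \<in> {-pi..pi}")
        case True thus ?thesis using elim by (auto intro!: mult_right_mono ennreal_leI)
      next
        case False thus ?thesis using f_supp[OF False] by simp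
      qed
    qed
  qed
  also have "\<dots> = ennreal ?K * (\<integral>\<^sup>+s. ennreal (hk N (y - s)) * indicator {-pi..pi} s \<partial>lborel)"
    by (subst nn_integral_cmult) auto
  also have "\<dots> \<le> ennreal ?K * ennreal (JN N)"
    unfolding JN_def by (intro mult_left_mono window_int[OF N y]) auto
  finally have "(\<integral>\<^sup>+s. ennreal (exp (hk N (y - s))) \<partial>density lborel f)
      \<le> 1 + ennreal (exp 1 - 1) * (ennreal ?K * ennreal (JN N))"
    by (simp add: add_left_mono mult_left_mono)
  also have "\<dots> = ennreal (1 + (exp 1 - 1) * ?K * JN N)"
  proof -
    have JN0: "JN N \<ge> 0" using N by (simp add: JN_def)
    have "ennreal (exp 1 - 1) * (ennreal ?K * ennreal (JN N)) = ennreal ((exp 1 - 1) * ?K * JN N)"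
      using K0 e1 JN0 by (simp add: ennreal_mult[symmetric] mult.assoc)
    moreover have "(exp 1 - 1) * ?K * JN N \<ge> 0" using K0 e1 JN0 by simp
    ultimately show ?thesis by (simp add: ennreal_plus)
  qed
  also have "\<dots> \<le> ennreal (exp ((exp 1 - 1) * ?K * JN N))"
    by (intro ennreal_leI exp_ge_add_one_self)
  finally show ?thesis .
qed


lemma nu_sf: "sigma_finite_measure (density lborel f)"
  by (rule prob_space_imp_sigma_finite[OF f_prob])

lemma S_meas:
  assumes "l < N"
  shows "(\<lambda>\<theta>. S N \<theta> l) \<in> borel_measurable (PiM {..<N} (\<lambda>_. density lborel f))"
  unfolding S_def
proof (intro borel_measurable_sum)
  fix m assume m: "m \<in> {..<N}"
  have c: "(\<lambda>\<theta>. \<theta> i) \<in> borel_measurable (PiM {..<N} (\<lambda>_. density lborel f))" if "i < N" for i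
  proof -
    have "(\<lambda>\<theta>. \<theta> i) \<in> measurable (PiM {..<N} (\<lambda>_. density lborel f)) (density lborel f)"
      using measurable_component_singleton[of i "{..<N}" "\<lambda>_. density lborel f"] that by simp
    thus ?thesis by (simp add: measurable_def)
  qed
  show "(\<lambda>\<theta>. hk N (\<theta> l - \<theta> m)) \<in> borel_measurable (PiM {..<N} (\<lambda>_. density lborel f))"
    using assms m by (intro measurable_compose[OF _ hk_meas] borel_measurable_diff c) auto
qed

lemma row_bound:
  assumes N: "N > 0" and l: "l < N"
  shows "(\<integral>\<^sup>+\<theta>. ennreal (exp (S N \<theta> l)) \<partial>PiM {..<N} (\<lambda>_. density lborel f))
     \<le> ennreal (exp 1 * exp ((exp 1 - 1) * Linf_norm f * JN N) ^ (N - 1))"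
proof -
  let ?\<nu> = "density lborel f"
  let ?c = "(exp 1 - 1) * Linf_norm f * JN N"
  interpret PS: product_sigma_finite "\<lambda>_::nat. ?\<nu>"
    by (simp add: product_sigma_finite_def nu_sf)
  define I where "I = {..<N} - {l}"
  have I: "finite I" "l \<notin> I" "insert l I = {..<N}" "card I = N - 1"
    using l by (auto simp: I_def)
  have meas: "(\<lambda>\<theta>. ennreal (exp (S N \<theta> l))) \<in> borel_measurable (PiM (insert l I) (\<lambda>_. ?\<nu>))"
    unfolding I(3) using S_meas[OF l] by measurable
  have "(\<integral>\<^sup>+\<theta>. ennreal (exp (S N \<theta> l)) \<partial>PiM {..<N} (\<lambda>_. ?\<nu>))
      = (\<integral>\<^sup>+y. (\<integral>\<^sup>+x. ennreal (exp (S N (x(l := y)) l)) \<partial>PiM I (\<lambda>_. ?\<nu>)) \<partial>?\<nu>)"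
    unfolding I(3)[symmetric] by (rule PS.product_nn_integral_insert_rev[OF I(1,2) meas])
  also have "\<dots> \<le> (\<integral>\<^sup>+y. ennreal (exp 1 * exp ?c ^ (N - 1)) \<partial>?\<nu>)"
  proof (intro nn_integral_mono_AE)
    have "AE y in lborel. 0 < ennreal (f y) \<longrightarrow> y \<in> {-pi..pi}"
      by (rule AE_I2) (metis f_supp ennreal_0 less_irrefl)
    hence "AE y in ?\<nu>. y \<in> {-pi..pi}"
      by (subst AE_density) auto
    thus "AE y in ?\<nu>. (\<integral>\<^sup>+x. ennreal (exp (S N (x(l := y)) l)) \<partial>PiM I (\<lambda>_. ?\<nu>))
        \<le> ennreal (exp 1 * exp ?c ^ (N - 1))"
    proof eventually_elim
      case (elim y)
      have pw: "ennreal (exp (S N (x(l := y)) l))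
          \<le> ennreal (exp 1) * (\<Prod>m\<in>I. ennreal (exp (hk N (y - x m))))" for x
      proof -
        have "S N (x(l := y)) l = hk N (y - y) + (\<Sum>m\<in>I. hk N (y - x m))"
          unfolding S_def I(3)[symmetric] using I(1,2)
          by (simp add: sum.insert) (intro sum.cong, auto)
        hence "exp (S N (x(l := y)) l) = exp (hk N 0) * (\<Prod>m\<in>I. exp (hk N (y - x m)))"
          using I(1) by (simp add: exp_add exp_sum)
        also have "\<dots> \<le> exp 1 * (\<Prod>m\<in>I. exp (hk N (y - x m)))"
          by (intro mult_right_mono prod_nonneg) (auto simp: hk_le1)
        finally have "ennreal (exp (S N (x(l := y)) l)) \<le> ennreal (exp 1 * (\<Prod>m\<in>I. exp (hk N (y - x m))))"
          by (rule ennreal_leI)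
        thus ?thesis by (simp add: ennreal_mult prod_nonneg prod_ennreal)
      qed
      have "(\<integral>\<^sup>+x. ennreal (exp (S N (x(l := y)) l)) \<partial>PiM I (\<lambda>_. ?\<nu>))
          \<le> (\<integral>\<^sup>+x. ennreal (exp 1) * (\<Prod>m\<in>I. ennreal (exp (hk N (y - x m)))) \<partial>PiM I (\<lambda>_. ?\<nu>))"
        by (intro nn_integral_mono pw)
      also have "\<dots> = ennreal (exp 1) * (\<integral>\<^sup>+x. (\<Prod>m\<in>I. ennreal (exp (hk N (y - x m)))) \<partial>PiM I (\<lambda>_. ?\<nu>))"
        by (rule nn_integral_cmult) measurable
      also have "(\<integral>\<^sup>+x. (\<Prod>m\<in>I. ennreal (exp (hk N (y - x m)))) \<partial>PiM I (\<lambda>_. ?\<nu>))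
          = (\<Prod>m\<in>I. (\<integral>\<^sup>+s. ennreal (exp (hk N (y - s))) \<partial>?\<nu>))"
        by (rule PS.product_nn_integral_prod[OF I(1)]) measurable
      also have "\<dots> \<le> (\<Prod>m\<in>I. ennreal (exp ?c))"
        by (intro prod_mono_ennreal factor_bound[OF N elim])
      also have "\<dots> = ennreal (exp ?c ^ (N - 1))"
        using I(4) by (simp add: ennreal_power)
      finally have "(\<integral>\<^sup>+x. ennreal (exp (S N (x(l := y)) l)) \<partial>PiM I (\<lambda>_. ?\<nu>))
          \<le> ennreal (exp 1) * ennreal (exp ?c ^ (N - 1))"
        by (simp add: mult_left_mono fun_upd_def)
      also have "ennreal (exp 1) * ennreal (exp ?c ^ (N - 1)) = ennreal (exp 1 * exp ?c ^ (N - 1))"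
        by (simp add: ennreal_mult)
      finally show ?case .
    qed
  qed
  also have "\<dots> = ennreal (exp 1 * exp ?c ^ (N - 1))"
    using prob_space.emeasure_space_1[OF f_prob] by simp
  finally show ?thesis .
qed


lemma S_nonneg: "0 \<le> S N \<theta> l"
  unfolding S_def by (intro sum_nonneg hk_nonneg)

lemma S_le: "S N \<theta> l \<le> real N"
proof -
  have "S N \<theta> l \<le> (\<Sum>m<N. 1)" unfolding S_def by (intro sum_mono hk_le1)
  thus ?thesis by simp
qed

lemma main_bound:
  assumes N: "N > 0"
  shows "(\<integral>\<theta>. lambda_max N \<theta> \<partial>(PiM {..<N} (\<lambda>_. density lborel f)))
     \<le> ln (real N * (exp 1 * exp ((exp 1 - 1) * Linf_norm f * JN N) ^ (N - 1)))"
proof -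
  let ?\<nu> = "density lborel f"
  let ?P = "PiM {..<N} (\<lambda>_. ?\<nu>)"
  define B1 where "B1 = exp 1 * exp ((exp 1 - 1) * Linf_norm f * JN N) ^ (N - 1)"
  define C where "C = real N * B1"
  have B1pos: "B1 > 0" unfolding B1_def by simp
  have Cpos: "C > 0" unfolding C_def using N B1pos by simp
  interpret P: prob_space ?P by (rule prob_space_PiM) (rule f_prob)
  have int_exp: "integrable ?P (\<lambda>\<theta>. exp (S N \<theta> l))" if "l < N" for l
  proof (rule P.integrable_const_bound[where B="exp (real N)"])
    show "AE \<theta> in ?P. norm (exp (S N \<theta> l)) \<le> exp (real N)"
      by (intro AE_I2) (simp add: S_le)
    show "(\<lambda>\<theta>. exp (S N \<theta> l)) \<in> borel_measurable ?P"
      using S_meas[OF that] by measurable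
  qed
  have exp_int: "(\<integral>\<theta>. exp (S N \<theta> l) \<partial>?P) \<le> B1" if l: "l < N" for l
  proof -
    have "ennreal (\<integral>\<theta>. exp (S N \<theta> l) \<partial>?P) = (\<integral>\<^sup>+\<theta>. ennreal (exp (S N \<theta> l)) \<partial>?P)"
      by (rule nn_integral_eq_integral[OF int_exp[OF l], symmetric]) simp
    also have "\<dots> \<le> ennreal B1" unfolding B1_def by (rule row_bound[OF N l])
    finally show ?thesis using B1pos by (simp add: ennreal_le_iff)
  qed
  define R where "R \<theta> = (ln C - 1) + (\<Sum>l<N. exp (S N \<theta> l)) / C" for \<theta>
  have isum: "integrable ?P (\<lambda>\<theta>. \<Sum>l<N. exp (S N \<theta> l))" by (intro Bochner_Integration.integrable_sum) (simp add: int_exp)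
  hence idiv: "integrable ?P (\<lambda>\<theta>. (\<Sum>l<N. exp (S N \<theta> l)) / C)" by (intro integrable_divide_zero)
  have intR: "integrable ?P R"
    unfolding R_def using idiv by (intro Bochner_Integration.integrable_add) simp_all
  have pw: "lambda_max N \<theta> \<le> R \<theta>" for \<theta>
  proof -
    obtain l where l: "l < N" "lambda_max N \<theta> \<le> S N \<theta> l" using lambda_le_S[OF N] by blast
    let ?s = "(\<Sum>l<N. exp (S N \<theta> l))"
    have spos: "?s > 0" using N by (intro sum_pos) auto
    have "S N \<theta> l = ln (exp (S N \<theta> l))" by simp
    also have "\<dots> \<le> ln ?s"
      using l(1) by (intro ln_mono) (auto intro!: member_le_sum)
    also have "ln ?s = ln C + ln (?s / C)" using spos Cpos by (simp add: ln_div)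
    also have "ln (?s / C) \<le> ?s / C - 1" using spos Cpos by (intro ln_le_minus_one) simp
    finally show ?thesis using l(2) unfolding R_def by linarith
  qed
  show ?thesis
  proof (cases "integrable ?P (lambda_max N)")
    case True
    have "(\<integral>\<theta>. lambda_max N \<theta> \<partial>?P) \<le> (\<integral>\<theta>. R \<theta> \<partial>?P)"
      by (intro integral_mono True intR pw)
    also have "(\<integral>\<theta>. R \<theta> \<partial>?P) = (ln C - 1) + (\<Sum>l<N. (\<integral>\<theta>. exp (S N \<theta> l) \<partial>?P)) / C"
    proof -
      have "(\<integral>\<theta>. R \<theta> \<partial>?P) = (\<integral>\<theta>. (ln C - 1) \<partial>?P) + (\<integral>\<theta>. (\<Sum>l<N. exp (S N \<theta> l)) / C \<partial>?P)"
        unfolding R_def by (rule Bochner_Integration.integral_add[OF P.integrable_const idiv])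
      also have "(\<integral>\<theta>. (ln C - 1) \<partial>?P) = ln C - 1" using P.prob_space by simp
      also have "(\<integral>\<theta>. (\<Sum>l<N. exp (S N \<theta> l)) / C \<partial>?P) = (\<integral>\<theta>. (\<Sum>l<N. exp (S N \<theta> l)) \<partial>?P) / C"
        by (rule integral_divide_zero)
      also have "(\<integral>\<theta>. (\<Sum>l<N. exp (S N \<theta> l)) \<partial>?P) = (\<Sum>l<N. (\<integral>\<theta>. exp (S N \<theta> l) \<partial>?P))"
        by (rule Bochner_Integration.integral_sum) (simp add: int_exp)
      finally show ?thesis .
    qed
    also have "(\<Sum>l<N. (\<integral>\<theta>. exp (S N \<theta> l) \<partial>?P)) \<le> (\<Sum>l<N. B1)"
      by (intro sum_mono exp_int) simp
    also have "(ln C - 1) + (\<Sum>l<N. B1) / C = ln C"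
      using Cpos N B1pos by (simp add: C_def)
    finally show ?thesis using Cpos unfolding C_def B1_def by (simp add: divide_right_mono)
  next
    case False
    hence "(\<integral>\<theta>. lambda_max N \<theta> \<partial>?P) = 0" by (rule not_integrable_integral_eq)
    moreover have "ln C \<ge> 0"
    proof -
      have "exp ((exp 1 - 1) * Linf_norm f * JN N) \<ge> 1"
        using K_pos N by (simp add: JN_def)
      hence "exp ((exp 1 - 1) * Linf_norm f * JN N) ^ (N - 1) \<ge> 1" by (rule one_le_power)
      moreover have "exp 1 \<ge> (1::real)" by simp
      ultimately have "1 * 1 \<le> exp 1 * exp ((exp 1 - 1) * Linf_norm f * JN N) ^ (N - 1)"
        by (intro mult_mono) auto
      hence B11: "B1 \<ge> 1" unfolding B1_def by simp
      have "real N \<ge> 1" using N by simp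
      hence "1 * 1 \<le> real N * B1" using B11 by (intro mult_mono) auto
      hence "C \<ge> 1" unfolding C_def by simp
      thus ?thesis by simp
    qed
    ultimately show ?thesis unfolding C_def B1_def by simp
  qed
qed

end


theorem corollary1:
  fixes f :: "real \<Rightarrow> real"
  assumes f_meas: "f \<in> borel_measurable lborel"
    and f_nonneg: "\<And>x. f x \<ge> 0"
    and f_supp: "\<And>x. x \<notin> {-pi..pi} \<Longrightarrow> f x = 0"
    and f_prob: "prob_space (density lborel f)"
    and f_bdd: "\<exists>B. \<forall>x. \<bar>f x\<bar> \<le> B"
  shows "\<exists>g :: nat \<Rightarrow> real. g \<longlonglongrightarrow> 0 \<and>
    (\<forall>\<^sub>F N in sequentially.
       (\<integral>\<theta>. lambda_max N \<theta> \<partial>(PiM {..<N} (\<lambda>_. density lborel f)))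
         \<le> (4 * pi * Linf_norm f * (exp 1 - 1) + 1) * ln (real N) + g N)"
proof -
  let ?K = "Linf_norm f"
  have Kp: "?K > 0" by (rule K_pos[OF assms])
  define a where "a = (exp 1 - 1) * ?K * (2 * pi)"
  have ap: "a > 0" unfolding a_def using Kp by simp
  define D where "D = (1 + a * (1 + ln 4)) / a"
  have aD: "a * D = 1 + a * (1 + ln 4)" unfolding D_def using ap by simp
  have ev: "\<forall>\<^sub>F N in sequentially. max 1 (nat \<lceil>exp D\<rceil>) \<le> N"
    by (rule eventually_ge_at_top)
  show ?thesis
  proof (intro exI[of _ "\<lambda>_. 0"] conjI)
    show "(\<lambda>_. 0 :: real) \<longlonglongrightarrow> 0" by simp
    show "\<forall>\<^sub>F N in sequentially.
       (\<integral>\<theta>. lambda_max N \<theta> \<partial>(PiM {..<N} (\<lambda>_. density lborel f)))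
         \<le> (4 * pi * Linf_norm f * (exp 1 - 1) + 1) * ln (real N) + 0"
      using ev
    proof eventually_elim
      case (elim N)
      have N: "N > 0" using elim by simp
      have "nat \<lceil>exp D\<rceil> \<le> N" using elim by simp
      hence "\<lceil>exp D\<rceil> \<le> int N" by (simp add: nat_le_iff)
      hence "exp D \<le> real_of_int (int N)" by (simp add: ceiling_le_iff)
      hence "exp D \<le> real N" by simp
      hence lnD: "D \<le> ln (real N)" using N by (metis exp_gt_zero ln_exp ln_mono)
      define X where "X = exp ((exp 1 - 1) * ?K * JN N)"
      have Xp: "X > 0" unfolding X_def by simp
      have mb: "(\<integral>\<theta>. lambda_max N \<theta> \<partial>(PiM {..<N} (\<lambda>_. density lborel f)))
          \<le> ln (real N * (exp 1 * X ^ (N - 1)))"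
        unfolding X_def by (rule main_bound[OF assms N])
      have eq: "ln (real N * (exp 1 * X ^ (N - 1))) = ln (real N) + 1 + real (N - 1) * ((exp 1 - 1) * ?K * JN N)"
        using N Xp by (simp add: ln_mult ln_realpow X_def)
      have JNb: "real (N - 1) * JN N \<le> 2 * pi * (1 + ln 4 + ln (real N))"
      proof -
        have J0: "JN N \<ge> 0" using N by (simp add: JN_def)
        have "real (N - 1) * JN N \<le> real N * JN N" using J0 by (intro mult_right_mono) auto
        also have "\<dots> = 2 * pi * (1 + ln (4 * real N))" using N by (simp add: JN_def)
        also have "ln (4 * real N) = ln 4 + ln (real N)" using N by (simp add: ln_mult)
        finally show ?thesis by (simp add: algebra_simps)
      qed
      have "real (N - 1) * ((exp 1 - 1) * ?K * JN N) = ((exp 1 - 1) * ?K) * (real (N - 1) * JN N)"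
        by (simp add: algebra_simps)
      also have "\<dots> \<le> ((exp 1 - 1) * ?K) * (2 * pi * (1 + ln 4 + ln (real N)))"
        using Kp JNb by (intro mult_left_mono) auto
      also have "\<dots> = a * (1 + ln 4) + a * ln (real N)" unfolding a_def by (simp add: algebra_simps)
      finally have T: "real (N - 1) * ((exp 1 - 1) * ?K * JN N) \<le> a * (1 + ln 4) + a * ln (real N)" .
      have "a * D \<le> a * ln (real N)" using ap lnD by (intro mult_left_mono) auto
      hence T2: "1 + a * (1 + ln 4) \<le> a * ln (real N)" using aD by simp
      have coef: "(4 * pi * Linf_norm f * (exp 1 - 1) + 1) * ln (real N) = ln (real N) + 2 * (a * ln (real N))"
        unfolding a_def by (simp add: algebra_simps)
      show ?case using mb eq T T2 coef by linarith
    qed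
  qed
qed

end
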